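(* Let $LS(n,k)$ be defined by $LS(0,0)=1$, $LS(n,k)=0$ if $k<0$ or $k>n$ (and $LS(n,k)=0$ for $n<0$), and $$LS(n,k)=(k^2+k)\,LS(n-1,k)+LS(n-1,k-1)\qquad (n\ge 1).$$ Then for every $n\ge 0$ the sequence $(LS(n,k))_{k}$ is log-concave in $k$.
   Context: A sequence $(a_k)$ is log-concave if $a_k^2\ge a_{k-1}a_{k+1}$ for all $k$. *)

theory Defs
  imports Main
begin

fun LS :: "nat \<Rightarrow> int \<Rightarrow> int" where
  "LS 0 k = (if k = 0 then 1 else 0)"
| "LS (Suc n) k = (if k < 0 \<or> k > int (Suc n) then 0
                   else (k^2 + k) * LS n k + LS n (k - 1))"

end

theory Submission
  imports Defs
begin

lemma core:
  fixes k u a t v :: int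
  assumes k: "k \<ge> 2" and u: "u \<ge> 0" and a: "a > 0" and t: "t > 0" and v: "v \<ge> 0"
    and C1: "k*u*t \<le> (k-1)*a^2" and C2: "(k+1)*a*v \<le> k*t^2"
  shows "(k+1)*((k-1)*k*a+u)*((k+1)*(k+2)*v+t) \<le> k*(k*(k+1)*t+a)^2"
proof -
  have p1: "(k*u*t)*((k+1)*a*v) \<le> ((k-1)*a^2)*(k*t^2)"
    by (rule mult_mono[OF C1 C2]) (use k u t a v in auto)
  have "(k*a*t)*((k+1)*u*v) \<le> (k*a*t)*((k-1)*a*t)"
    using p1 by (simp add: algebra_simps power2_eq_square)
  hence C3: "(k+1)*u*v \<le> (k-1)*a*t"
    using k a t by (simp add: mult_le_cancel_left_pos)
  let ?c1 = "(k-1)*k" and ?c2 = "(k+1)*(k+2)"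
  have c1: "?c1 \<ge> 0" and c2: "?c2 \<ge> 0" using k by auto
  have B1: "k*?c1*?c2*((k+1)*a*v) \<le> k*?c1*?c2*(k*t^2)"
    by (rule mult_left_mono[OF C2]) (use k c1 c2 in auto)
  have B2: "k*?c2*((k+1)*u*v) \<le> k*?c2*((k-1)*a*t)"
    by (rule mult_left_mono[OF C3]) (use k c2 in auto)
  have B3: "(k+1)*(k*u*t) \<le> (k+1)*((k-1)*a^2)"
    by (rule mult_left_mono[OF C1]) (use k in auto)
  have E1: "k*((k+1)*((k-1)*k*a+u)*((k+1)*(k+2)*v+t)) =
     k*?c1*?c2*((k+1)*a*v) + k*(k+1)*?c1*a*t + k*?c2*((k+1)*u*v) + (k+1)*(k*u*t)"
    by (simp add: algebra_simps)
  have E2: "k*(k*(k*(k+1)*t+a)^2) = k*?c1*?c2*(k*t^2) + k*(k+1)*?c1*a*t + k*?c2*((k-1)*a*t)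
      + (k+1)*((k-1)*a^2) + (2*k^3*(k+1)*t^2 + 2*k*(k+1)*a*t + a^2)"
    by (simp add: algebra_simps power2_eq_square power3_eq_cube)
  have nn: "2*k^3*(k+1)*t^2 + 2*k*(k+1)*a*t + a^2 \<ge> 0"
    using k a t by (simp add: add_nonneg_nonneg)
  have "k*((k+1)*((k-1)*k*a+u)*((k+1)*(k+2)*v+t)) \<le> k*(k*(k*(k+1)*t+a)^2)"
    unfolding E1 E2 using B1 B2 B3 nn by linarith
  thus ?thesis using k by (simp add: mult_le_cancel_left_pos)
qed

lemma LS_out: "k < 0 \<or> k > int n \<Longrightarrow> LS n k = 0"
  by (induction n arbitrary: k) auto

lemma LS_nonneg: "LS n k \<ge> 0"
  by (induction n arbitrary: k) auto

lemma LS_pos: "1 \<le> k \<Longrightarrow> k \<le> int n \<Longrightarrow> LS n k > 0"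
proof (induction n arbitrary: k)
  case 0 then show ?case by simp
next
  case (Suc m)
  have a: "(k^2+k) * LS m k \<ge> 0" using Suc.prems LS_nonneg[of m k] by simp
  have "LS m (k-1) > 0 \<or> LS m k > 0"
  proof (cases "k = 1")
    case True
    then show ?thesis using Suc.IH[of 1] by (cases m) auto
  next
    case False
    then show ?thesis using Suc.IH[of "k-1"] Suc.prems by auto
  qed
  moreover have "LS m k > 0 \<Longrightarrow> (k^2+k) * LS m k > 0"
  proof -
    assume h: "LS m k > 0"
    have "k^2 + k > 0" using Suc.prems by (simp add: add_pos_pos)
    thus ?thesis using h by (rule mult_pos_pos)
  qed
  ultimately show ?case using Suc.prems a LS_nonneg[of m "k-1"] by auto
qed

lemma ulc: "(k+1) * LS n (k-1) * LS n (k+1) \<le> k * (LS n k)^2"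
proof (induction n arbitrary: k)
  case 0 then show ?case by auto
next
  case (Suc m)
  have nn: "k * (LS (Suc m) k)^2 \<ge> 0" if "k \<ge> 0" using that by simp
  consider "k < 0" | "k = 0" | "k = 1" | "k \<ge> int (Suc m)" | "2 \<le> k \<and> k \<le> int m" by linarith
  then show ?case
  proof cases
    case 1 then show ?thesis using LS_out[of "k-1" "Suc m"] LS_out[of k "Suc m"] by simp
  next
    case 2 then show ?thesis using LS_out[of "k-1" "Suc m"] by simp
  next
    case 3 then show ?thesis using LS_out[of "-1" m] nn by simp
  next
    case 4 then show ?thesis using LS_out[of "k+1" "Suc m"] nn by simp
  next
    case 5
    hence k: "k \<ge> 2" "k \<le> int m" by auto
    define u where "u = LS m (k-2)"
    define a where "a = LS m (k-1)"
    define t where "t = LS m k"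
    define v where "v = LS m (k+1)"
    have C1: "k*u*t \<le> (k-1)*a^2" using Suc.IH[of "k-1"] unfolding u_def a_def t_def
      by (simp add: algebra_simps)
    have C2: "(k+1)*a*v \<le> k*t^2" using Suc.IH[of k] unfolding a_def t_def v_def by simp
    have pa: "a > 0" unfolding a_def using LS_pos[of "k-1" m] k by simp
    have pt: "t > 0" unfolding t_def using LS_pos[of "k" m] k by simp
    have y1: "LS (Suc m) (k-1) = (k-1)*k*a + u" unfolding a_def u_def using k
      by (simp add: algebra_simps power2_eq_square)
    have y2: "LS (Suc m) k = k*(k+1)*t + a" unfolding a_def t_def using k
      by (simp add: algebra_simps power2_eq_square)
    have y3: "LS (Suc m) (k+1) = (k+1)*(k+2)*v + t" unfolding v_def t_def using k
      by (simp add: algebra_simps power2_eq_square)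
    show ?thesis unfolding y1 y2 y3
      using core[OF k(1) _ pa pt _ C1 C2] LS_nonneg unfolding u_def v_def
      by (simp add: algebra_simps)
  qed
qed

theorem mainTheorem6:
  fixes n :: nat and k :: int
  shows "(LS n k)^2 \<ge> LS n (k - 1) * LS n (k + 1)"
proof (cases "k \<ge> 1")
  case True
  have p: "LS n (k - 1) * LS n (k + 1) \<ge> 0" using LS_nonneg by simp
  have "k * (LS n (k - 1) * LS n (k + 1)) \<le> (k+1) * LS n (k-1) * LS n (k+1)"
    using p by (simp add: algebra_simps)
  also have "\<dots> \<le> k * (LS n k)^2" by (rule ulc)
  finally show ?thesis using True by (simp add: mult_le_cancel_left_pos)
next
  case False
  then show ?thesis using LS_out[of "k-1" n] by simp
qed

end
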